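(* Let $\odot$ be a non-degenerate pseudo-multiplication and let $\tau$ be a $\sigma$-maxitive measure on a $\sigma$-algebra $\mathcal{B}$ on a nonempty set $E$ having the Radon–Nikodym property with respect to the idempotent $\odot$-integral. Then $\tau$ has no $\odot$-spot. That is, there is no $B_0\in\mathcal{B}$ such that $\tau(B_0)$ is $\odot$-infinite and, for every $A\in\mathcal{B}$ with $A\subset B_0$, $\tau(A)$ is either $0$ or $\odot$-infinite.
   Context: Write $\overline{\mathbb{R}}_+=[0,\infty]$. A pseudo-multiplication is a binary operation $\odot$ on $\overline{\mathbb{R}}_+$ with the following properties: - it is associative; - it is continuous on $(0,\infty)\times[0,\infty]$; - for every $t$, the map $s\mapsto s\odot t$ is continuous on $(0,\infty]$; - it is nondecreasing in each argument; - it has a left identity $1_\odot$, i.e. $1_\odot\odot t=t$ for all $t$; - it has no zero divisors, i.e. $s\odot t=0$ implies $s=0$ or $t=0$; - $0\odot t=t\odot 0=0$ for all $t$. Put $O(t)=\inf_{s>0}s\odot t$. An element $t$ is $\odot$-finite if $O(t)=0$, and $\odot$-infinite otherwise. The operation $\odot$ is non-degenerate if $1_\odot$ is $\odot$-finite. A $\sigma$-maxitive measure on $\mathcal{B}$ is a map $\nu:\mathcal{B}\to\overline{\mathbb{R}}_+$ with $\nu(\emptyset)=0$ and $\nu(\bigcup_j B_j)=\sup_j\nu(B_j)$ for every countable family. A map $f:E\to\overline{\mathbb{R}}_+$ is $\mathcal{B}$-measurable if $\{f>t\}\in\mathcal{B}$ for all $t\in[0,\infty)$. The idempotent $\odot$-integral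 is $\int^\infty_B f\odot d\tau=\sup_{t\in[0,\infty)}t\odot\tau(B\cap\{f>t\})$. $\nu\ll_\odot\tau$ means $\nu(B)\le\infty\odot\tau(B)$ for every $B\in\mathcal{B}$ with $\tau(B)$ $\odot$-finite. $\tau$ has the Radon–Nikodym property if every $\sigma$-maxitive $\nu\ll_\odot\tau$ admits a $\mathcal{B}$-measurable $c:E\to\overline{\mathbb{R}}_+$ with $\nu(B)=\int^\infty_B c\odot d\tau$ for all $B\in\mathcal{B}$. *)

theory Defs
  imports "HOL-Analysis.Analysis"
begin

text \<open>Values in [0,\<infinity>] are modelled by ennreal. The pseudo-multiplication is
  the operation op with a designated left identity one.\<close>

definition pseudo_mult :: "(ennreal \<Rightarrow> ennreal \<Rightarrow> ennreal) \<Rightarrow> ennreal \<Rightarrow> bool" where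
  "pseudo_mult op one \<longleftrightarrow>
     (\<forall>r s t. op (op r s) t = op r (op s t)) \<and>
     continuous_on ({0<..<\<infinity>} \<times> UNIV) (\<lambda>(s, t). op s t) \<and>
     (\<forall>t. continuous_on {0<..} (\<lambda>s. op s t)) \<and>
     (\<forall>s s' t t'. s \<le> s' \<longrightarrow> t \<le> t' \<longrightarrow> op s t \<le> op s' t') \<and>
     (\<forall>t. op one t = t) \<and>
     (\<forall>s t. op s t = 0 \<longrightarrow> s = 0 \<or> t = 0) \<and>
     (\<forall>t. op 0 t = 0 \<and> op t 0 = 0)"

definition pm_O :: "(ennreal \<Rightarrow> ennreal \<Rightarrow> ennreal) \<Rightarrow> ennreal \<Rightarrow> ennreal" where
  "pm_O op t = (INF s\<in>{0<..}. op s t)"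

definition pm_finite :: "(ennreal \<Rightarrow> ennreal \<Rightarrow> ennreal) \<Rightarrow> ennreal \<Rightarrow> bool" where
  "pm_finite op t \<longleftrightarrow> pm_O op t = 0"

definition pm_infinite :: "(ennreal \<Rightarrow> ennreal \<Rightarrow> ennreal) \<Rightarrow> ennreal \<Rightarrow> bool" where
  "pm_infinite op t \<longleftrightarrow> \<not> pm_finite op t"

definition non_degenerate :: "(ennreal \<Rightarrow> ennreal \<Rightarrow> ennreal) \<Rightarrow> ennreal \<Rightarrow> bool" where
  "non_degenerate op one \<longleftrightarrow> pm_finite op one"

text \<open>sigma-maxitive measure on the sigma-algebra B (countable families are
  represented by sequences; finite families by repetition).\<close>
definition sigma_maxitive :: "'a set set \<Rightarrow> ('a set \<Rightarrow> ennreal) \<Rightarrow> bool" where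
  "sigma_maxitive B nu \<longleftrightarrow> nu {} = 0 \<and>
     (\<forall>Bs :: nat \<Rightarrow> 'a set. range Bs \<subseteq> B \<longrightarrow> nu (\<Union>j. Bs j) = (SUP j. nu (Bs j)))"

definition B_measurable :: "'a set \<Rightarrow> 'a set set \<Rightarrow> ('a \<Rightarrow> ennreal) \<Rightarrow> bool" where
  "B_measurable E B f \<longleftrightarrow> (\<forall>t::ennreal. t < \<infinity> \<longrightarrow> {x\<in>E. f x > t} \<in> B)"

definition idem_integral ::
  "(ennreal \<Rightarrow> ennreal \<Rightarrow> ennreal) \<Rightarrow> 'a set \<Rightarrow> ('a set \<Rightarrow> ennreal) \<Rightarrow> 'a set \<Rightarrow> ('a \<Rightarrow> ennreal) \<Rightarrow> ennreal" where
  "idem_integral op E tau A f = (SUP t\<in>{..<\<infinity>}. op t (tau (A \<inter> {x\<in>E. f x > t})))"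

definition pm_abs_cont ::
  "(ennreal \<Rightarrow> ennreal \<Rightarrow> ennreal) \<Rightarrow> 'a set set \<Rightarrow> ('a set \<Rightarrow> ennreal) \<Rightarrow> ('a set \<Rightarrow> ennreal) \<Rightarrow> bool" where
  "pm_abs_cont op B nu tau \<longleftrightarrow>
     (\<forall>A\<in>B. pm_finite op (tau A) \<longrightarrow> nu A \<le> op \<infinity> (tau A))"

definition radon_nikodym_property ::
  "(ennreal \<Rightarrow> ennreal \<Rightarrow> ennreal) \<Rightarrow> 'a set \<Rightarrow> 'a set set \<Rightarrow> ('a set \<Rightarrow> ennreal) \<Rightarrow> bool" where
  "radon_nikodym_property op E B tau \<longleftrightarrow>
     (\<forall>nu. sigma_maxitive B nu \<and> pm_abs_cont op B nu tau \<longrightarrow>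
        (\<exists>c. B_measurable E B c \<and> (\<forall>A\<in>B. nu A = idem_integral op E tau A c)))"

definition pm_spot ::
  "(ennreal \<Rightarrow> ennreal \<Rightarrow> ennreal) \<Rightarrow> 'a set set \<Rightarrow> ('a set \<Rightarrow> ennreal) \<Rightarrow> 'a set \<Rightarrow> bool" where
  "pm_spot op B tau B0 \<longleftrightarrow> B0 \<in> B \<and> pm_infinite op (tau B0) \<and>
     (\<forall>A\<in>B. A \<subseteq> B0 \<longrightarrow> tau A = 0 \<or> pm_infinite op (tau A))"

end

theory Submission
  imports Defs
begin

lemma tau_mono:
  assumes "sigma_maxitive B tau" "A \<in> B" "A' \<in> B" "A \<subseteq> A'"
  shows "tau A \<le> tau A'"
proof -
  let ?Bs = "\<lambda>j::nat. if j = 0 then A else A'"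
  have "range ?Bs \<subseteq> B" using assms by auto
  hence "tau (\<Union>j. ?Bs j) = (SUP j. tau (?Bs j))" using assms(1) unfolding sigma_maxitive_def by blast
  moreover have "(\<Union>j. ?Bs j) = A'" using assms(4) by (auto split: if_splits)
  moreover have "tau (?Bs 0) \<le> (SUP j. tau (?Bs j))" by (rule SUP_upper) auto
  ultimately show ?thesis by simp
qed

lemma O_mono:
  assumes "pseudo_mult op one" "u \<le> u'"
  shows "pm_O op u \<le> pm_O op u'"
proof -
  have m: "\<And>s. op s u \<le> op s u'" using assms unfolding pseudo_mult_def by auto
  show ?thesis unfolding pm_O_def by (rule INF_mono) (use m in blast)
qed

theorem mainTheorem7:
  fixes op :: "ennreal \<Rightarrow> ennreal \<Rightarrow> ennreal" and one :: ennreal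
    and E :: "'a set" and B :: "'a set set" and tau :: "'a set \<Rightarrow> ennreal"
  assumes "pseudo_mult op one"
    and "non_degenerate op one"
    and "E \<noteq> {}"
    and "sigma_algebra E B"
    and "sigma_maxitive B tau"
    and "radon_nikodym_property op E B tau"
  shows "\<not> (\<exists>B0. pm_spot op B tau B0)"
proof
  assume "\<exists>B0. pm_spot op B tau B0"
  then obtain B0 where B0: "B0 \<in> B" "pm_infinite op (tau B0)"
    "\<And>A. A \<in> B \<Longrightarrow> A \<subseteq> B0 \<Longrightarrow> tau A = 0 \<or> pm_infinite op (tau A)"
    unfolding pm_spot_def by blast
  have pm: "\<And>r s t. op (op r s) t = op r (op s t)"
     "\<And>s s' t t'. s \<le> s' \<Longrightarrow> t \<le> t' \<Longrightarrow> op s t \<le> op s' t'"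
     "\<And>t. op one t = t" "\<And>s t. op s t = 0 \<Longrightarrow> s = 0 \<or> t = 0"
     "\<And>t. op 0 t = 0" "\<And>t. op t 0 = 0"
    using assms(1) unfolding pseudo_mult_def by auto
  interpret sa: sigma_algebra E B by fact
  have tau0: "tau {} = 0" using assms(5) unfolding sigma_maxitive_def by auto
  have fin0: "pm_finite op 0" unfolding pm_finite_def pm_O_def using pm(6)
    by (simp add: INF_constant) (metis greaterThan_iff less_numeral_extra(1) empty_iff)
  have finone: "pm_finite op one" using assms(2) unfolding non_degenerate_def .
  have one0: "one \<noteq> 0" using pm(3)[of 1] pm(5)[of 1] by auto
  define nu where "nu A = (if tau (A \<inter> B0) = 0 then 0 else one)" for A
  have smax: "sigma_maxitive B nu"
    unfolding sigma_maxitive_def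
  proof (intro conjI allI impI)
    show "nu {} = 0" using tau0 by (simp add: nu_def)
    fix Bs :: "nat \<Rightarrow> 'a set" assume r: "range Bs \<subseteq> B"
    have r2: "range (\<lambda>j. Bs j \<inter> B0) \<subseteq> B" using r B0(1) by auto
    have eq: "(\<Union>j. Bs j) \<inter> B0 = (\<Union>j. Bs j \<inter> B0)" by auto
    have t: "tau ((\<Union>j. Bs j) \<inter> B0) = (SUP j. tau (Bs j \<inter> B0))"
      unfolding eq using assms(5) r2 unfolding sigma_maxitive_def by blast
    show "nu (\<Union>j. Bs j) = (SUP j. nu (Bs j))"
    proof (cases "\<forall>j. tau (Bs j \<inter> B0) = 0")
      case True
      then show ?thesis unfolding nu_def t by simp
    next
      case False
      then obtain j where j: "tau (Bs j \<inter> B0) \<noteq> 0" by blast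
      have "tau (Bs j \<inter> B0) \<le> (SUP j. tau (Bs j \<inter> B0))" by (rule SUP_upper) auto
      hence "tau ((\<Union>j. Bs j) \<inter> B0) \<noteq> 0" using j t by auto
      hence l: "nu (\<Union>j. Bs j) = one" by (simp add: nu_def)
      have "(SUP j. nu (Bs j)) = one"
      proof (rule antisym)
        show "(SUP j. nu (Bs j)) \<le> one" by (rule SUP_least) (simp add: nu_def)
        have "nu (Bs j) = one" using j by (simp add: nu_def)
        thus "one \<le> (SUP j. nu (Bs j))" by (metis SUP_upper UNIV_I)
      qed
      thus ?thesis using l by simp
    qed
  qed
  have ac: "pm_abs_cont op B nu tau"
    unfolding pm_abs_cont_def
  proof (intro ballI impI)
    fix A assume A: "A \<in> B" "pm_finite op (tau A)"
    have AB: "A \<inter> B0 \<in> B" using A B0 by auto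
    have "tau (A \<inter> B0) \<le> tau A" by (rule tau_mono[OF assms(5) AB A(1)]) auto
    hence "pm_O op (tau (A \<inter> B0)) \<le> pm_O op (tau A)" by (rule O_mono[OF assms(1)])
    hence "pm_finite op (tau (A \<inter> B0))" using A(2) unfolding pm_finite_def by simp
    hence "tau (A \<inter> B0) = 0" using B0(3)[OF AB] unfolding pm_infinite_def by auto
    thus "nu A \<le> op \<infinity> (tau A)" by (simp add: nu_def)
  qed
  obtain c where cm: "B_measurable E B c" and ceq: "\<And>A. A \<in> B \<Longrightarrow> nu A = idem_integral op E tau A c"
    using assms(6) smax ac unfolding radon_nikodym_property_def by blast
  have B0E: "B0 \<subseteq> E" using B0(1) sa.sets_into_space by auto
  define T where "T n = ennreal (inverse (real (Suc n)))" for n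
  have Tpos: "T n > 0" "T n < \<infinity>" for n unfolding T_def by auto
  define Z where "Z = B0 - {x\<in>E. c x > 0}"
  have ZB: "Z \<in> B" unfolding Z_def using B0(1) cm unfolding B_measurable_def by auto
  have "idem_integral op E tau Z c = 0"
    unfolding idem_integral_def
  proof -
    have "\<And>t. Z \<inter> {x\<in>E. c x > t} = {}" unfolding Z_def by (auto intro: le_less_trans[OF zero_le])
    thus "(SUP t\<in>{..<\<infinity>}. op t (tau (Z \<inter> {x\<in>E. c x > t}))) = 0" using tau0 pm(6) by (simp add: SUP_constant) (metis ennreal_less_top lessThan_iff empty_iff)
  qed
  hence "nu Z = 0" using ceq[OF ZB] by simp
  hence Z0: "tau Z = 0" unfolding nu_def using one0 Z_def
    by (metis Int_absorb2 Diff_subset)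
  define Bs where "Bs n = (if n = 0 then Z else B0 \<inter> {x\<in>E. c x > T (n - 1)})" for n
  have BsB: "range Bs \<subseteq> B" using ZB B0(1) cm Tpos unfolding Bs_def B_measurable_def by auto
  have "(\<Union>n. Bs n) = B0"
  proof
    show "(\<Union>n. Bs n) \<subseteq> B0" unfolding Bs_def Z_def by auto
    show "B0 \<subseteq> (\<Union>n. Bs n)"
    proof
      fix x assume x: "x \<in> B0"
      show "x \<in> (\<Union>n. Bs n)"
      proof (cases "c x > 0")
        case False
        hence "x \<in> Bs 0" using x unfolding Bs_def Z_def by auto
        thus ?thesis by blast
      next
        case True
        have "\<exists>n. T n < c x"
        proof (cases "c x = \<infinity>")
          case True thus ?thesis using Tpos by auto
        next
          case False
          then obtain r where r: "c x = ennreal r" "r \<ge> 0" by (cases "c x") auto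
          hence "r > 0" using True by auto
          then obtain n where "inverse (real (Suc n)) < r" using reals_Archimedean by blast
          thus ?thesis unfolding T_def r(1) using \<open>r > 0\<close>
            by (metis ennreal_lessI)
        qed
        then obtain n where "T n < c x" by blast
        hence "x \<in> Bs (Suc n)" using x B0E unfolding Bs_def by auto
        thus ?thesis by blast
      qed
    qed
  qed
  hence tB0: "tau B0 = (SUP n. tau (Bs n))" using assms(5) BsB unfolding sigma_maxitive_def by metis
  have "tau B0 \<noteq> 0" using B0(2) fin0 unfolding pm_infinite_def by auto
  then obtain n where n: "tau (Bs n) \<noteq> 0" using tB0 by (metis SUP_bot_conv(2) bot_ennreal)
  have "n \<noteq> 0" using n Z0 unfolding Bs_def by (auto split: if_splits)
  then obtain m where m: "n = Suc m" by (cases n) auto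
  define w where "w = tau (B0 \<inter> {x\<in>E. c x > T m})"
  have wB: "B0 \<inter> {x\<in>E. c x > T m} \<in> B" using B0(1) cm Tpos unfolding B_measurable_def by auto
  have w0: "w \<noteq> 0" using n m unfolding w_def Bs_def by simp
  hence winf: "pm_infinite op w" using B0(3)[OF wB] unfolding w_def by auto
  have B0int: "B0 \<inter> {x\<in>E. c x > T m} = B0 \<inter> {x \<in> E. T m < c x}" by simp
  have "nu B0 = one" using B0 \<open>tau B0 \<noteq> 0\<close> by (simp add: nu_def)
  hence "one = idem_integral op E tau B0 c" using ceq[OF B0(1)] by simp
  also have "\<dots> \<ge> op (T m) w" unfolding idem_integral_def w_def
    by (rule SUP_upper) (use Tpos in auto)
  finally have le: "op (T m) w \<le> one" .
  have "pm_O op w \<le> pm_O op (op (T m) w)"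
    unfolding pm_O_def
  proof (rule INF_greatest)
    fix s :: ennreal assume s: "s \<in> {0<..}"
    have "op s (T m) \<noteq> 0" using pm(4)[of s "T m"] s Tpos(1)[of m] by auto
    hence "op s (T m) \<in> {0<..}" by (simp add: zero_less_iff_neq_zero)
    hence "(INF s\<in>{0<..}. op s w) \<le> op (op s (T m)) w" by (rule INF_lower)
    thus "(INF s\<in>{0<..}. op s w) \<le> op s (op (T m) w)" using pm(1) by simp
  qed
  also have "\<dots> \<le> pm_O op one" by (rule O_mono[OF assms(1) le])
  finally have "pm_O op w \<le> 0" using finone unfolding pm_finite_def by simp
  thus False using winf unfolding pm_infinite_def pm_finite_def by simp
qed

end
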